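(* For $n\ge1$ let $\mathfrak C^{(0)}_{-1/2}(q;t_1,\dots,t_n):=\mathrm{tr}_{\mathcal F^{-1/2}}\big(q^{L_0}\mathsf C(t_1)\cdots\mathsf C(t_n)\big)$. Then $$\mathfrak C^{(0)}_{-1/2}(q;qt_1,t_2,\dots,t_n)=\sum_{s=0}^{n-1}\sum_{1<i_1<\cdots<i_s\le n}\sum_{\epsilon_{i_1},\dots,\epsilon_{i_s}\in\{\pm1\}}(-1)^{s+\#\epsilon}\,\mathfrak C^{(0)}_{-1/2}\big(q;\,t_1t_{i_1}^{\epsilon_{i_1}}\cdots t_{i_s}^{\epsilon_{i_s}},\,(t_j)_{j\notin\{1,i_1,\dots,i_s\}}\big),$$ where $\#\epsilon$ is the number of $a$ with $\epsilon_{i_a}=-1$, and on the right the first argument is followed by the remaining $t_j$ in increasing order of $j$. Both sides are power series in $q^{1/2}$ with coefficients rational in the $t_j^{1/2}$.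
   Context: $\mathcal F^{-1/2}$ is the Fock space of a bosonic field with modes $\chi_r$, $r\in\frac12+\mathbb Z$, $[\chi_r,\chi_s]=(-1)^{r+1/2}\delta_{r+s,0}$, $\chi_r|0\rangle=0$ for $r>0$; it has basis $v_\lambda=\chi_{-\lambda_1+1/2}\chi_{-\lambda_2+1/2}\cdots|0\rangle$ over partitions $\lambda$. $L_0v_\lambda=(|\lambda|-\ell(\lambda)/2)v_\lambda$, and $\mathsf C(t)=\sum_{r\in\frac12+\mathbb Z}(-1)^{r+1/2}t^r\chi_{-r}\chi_r$ acts diagonally by $\mathsf C(t)v_\lambda=\big(\sum_{i=1}^{\ell(\lambda)}(t^{\lambda_i-1/2}-t^{-\lambda_i+1/2})+\frac{1}{t^{-1/2}-t^{1/2}}\big)v_\lambda$. *)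

theory Defs
  imports "HOL-Analysis.Analysis" "HOL-Library.FuncSet"
begin

text \<open>We work analytically over the complex numbers.
  The variable p stands for q^(1/2), and a list xs of complex numbers stands
  for the square roots (t_1^(1/2), ..., t_n^(1/2)); thus t^(k - 1/2) = s^(2k-1)
  where s = t^(1/2).\<close>

definition partitions :: "nat list set" where
  "partitions = {lam. sorted_wrt (\<ge>) lam \<and> 0 \<notin> set lam}"

text \<open>Eigenvalue of C(t) on v_lam, where s = t^(1/2).\<close>
definition C_eig :: "complex \<Rightarrow> nat list \<Rightarrow> complex" where
  "C_eig s lam =
     sum_list (map (\<lambda>k. s ^ (2*k - 1) - inverse s ^ (2*k - 1)) lam)
     + 1 / (inverse s - s)"

text \<open>Eigenvalue of q^(L_0) on v_lam, where p = q^(1/2): q^(|lam| - l(lam)/2).\<close>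
definition L0_weight :: "complex \<Rightarrow> nat list \<Rightarrow> complex" where
  "L0_weight p lam = p ^ (2 * sum_list lam - length lam)"

text \<open>The trace of q^(L_0) C(t_1) ... C(t_n) over F^(-1/2), computed in the
  eigenbasis v_lam.\<close>
definition trace_C :: "complex \<Rightarrow> complex list \<Rightarrow> complex" where
  "trace_C p xs = (\<Sum>\<^sub>\<infinity>lam\<in>partitions.
      L0_weight p lam * prod_list (map (\<lambda>s. C_eig s lam) xs))"

text \<open>Domain of absolute convergence of the trace (away from poles):
  q^(1/2) nonzero, each t_k nonzero and different from 1, and
  |q * prod_(k in K) t_k^(+-1)| < 1 for every subset K of the arguments and
  every choice of signs.\<close>
definition conv_domain :: "complex \<Rightarrow> complex list \<Rightarrow> bool" where
  "conv_domain p xs \<longleftrightarrow> p \<noteq> 0 \<and> (\<forall>s\<in>set xs. s \<noteq> 0 \<and> s\<^sup>2 \<noteq> 1) \<and>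
     (\<forall>K \<subseteq> {..<length xs}. \<forall>e::nat \<Rightarrow> bool.
        norm (p * (\<Prod>k\<in>K. if e k then xs ! k else inverse (xs ! k))) < 1)"

text \<open>Indices are 0-based: ss ! 0 = t_1^(1/2); e i = True means eps_i = +1.\<close>
definition rhs_args :: "complex list \<Rightarrow> nat set \<Rightarrow> (nat \<Rightarrow> bool) \<Rightarrow> complex list" where
  "rhs_args ss I e =
     (hd ss * (\<Prod>i\<in>I. if e i then ss ! i else inverse (ss ! i)))
     # map (nth ss) (filter (\<lambda>j. j \<notin> I) [1..<length ss])"

end

theory Submission
  imports Defs "HOL-Library.Multiset"
begin

definition PM :: "nat multiset set" where "PM = {M. 0 \<notin># M}"
definition Wm :: "complex \<Rightarrow> nat multiset \<Rightarrow> complex" where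
  "Wm p M = p ^ (2 * sum_mset M - size M)"
definition gg :: "complex \<Rightarrow> nat \<Rightarrow> complex" where
  "gg s k = s ^ (2*k - 1) - inverse s ^ (2*k - 1)"
definition cc :: "complex \<Rightarrow> complex" where "cc s = 1 / (inverse s - s)"
definition CEm :: "complex \<Rightarrow> nat multiset \<Rightarrow> complex" where
  "CEm s M = sum_mset (image_mset (gg s) M) + cc s"
definition Fm :: "complex list \<Rightarrow> nat multiset \<Rightarrow> complex" where
  "Fm ys M = prod_list (map (\<lambda>s. CEm s M) ys)"
definition Tm :: "complex \<Rightarrow> complex list \<Rightarrow> complex" where
  "Tm p xs = (\<Sum>\<^sub>\<infinity>M\<in>PM. Wm p M * Fm xs M)"

lemma bij_mset_partitions: "bij_betw mset partitions PM"
proof (rule bij_betw_imageI)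
  show "inj_on mset partitions"
  proof (rule inj_onI)
    fix xs ys assume xs: "xs \<in> partitions" and ys: "ys \<in> partitions" and e: "mset xs = mset ys"
    have "sorted (rev xs)" "sorted (rev ys)" using xs ys by (auto simp: partitions_def sorted_wrt_rev)
    moreover have "mset (rev xs) = mset (rev ys)" using e by simp
    ultimately have "rev xs = rev ys" by (metis properties_for_sort)
    thus "xs = ys" by simp
  qed
  show "mset ` partitions = PM"
  proof
    show "mset ` partitions \<subseteq> PM" by (auto simp: partitions_def PM_def)
    show "PM \<subseteq> mset ` partitions"
    proof
      fix M assume "M \<in> PM"
      let ?l = "rev (sorted_list_of_multiset M)"
      have "?l \<in> partitions" using \<open>M \<in> PM\<close>
        by (auto simp: partitions_def PM_def sorted_wrt_rev)
      moreover have "mset ?l = M" by simp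
      ultimately show "M \<in> mset ` partitions" by (metis image_eqI)
    qed
  qed
qed

lemma sum_list_map_mset: "sum_list (map f xs) = sum_mset (image_mset f (mset xs))"
  by (induction xs) auto

lemma C_eig_CEm: "C_eig s lam = CEm s (mset lam)"
  unfolding C_eig_def CEm_def cc_def sum_list_map_mset gg_def[abs_def] by simp

lemma trace_C_Tm: "trace_C p xs = Tm p xs"
proof -
  have "trace_C p xs = (\<Sum>\<^sub>\<infinity>lam\<in>partitions. Wm p (mset lam) * Fm xs (mset lam))"
    unfolding trace_C_def
    by (intro infsum_cong) (simp add: L0_weight_def Wm_def Fm_def C_eig_CEm sum_mset_sum_list[symmetric])
  also have "\<dots> = Tm p xs" unfolding Tm_def
    by (rule infsum_reindex_bij_betw[OF bij_mset_partitions])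
  finally show ?thesis .
qed

lemma sum_mset_sum_repl: "sum_mset (\<Sum>k\<in>A. replicate_mset (f k) k) = (\<Sum>k\<in>A. f k * k)"
  by (induction A rule: infinite_finite_induct) auto

lemma count_sum_repl: "finite A \<Longrightarrow> count (\<Sum>k\<in>A. replicate_mset (f k) k) j = (if j \<in> A then f j else 0)"
  by (simp add: count_sum sum.If_cases[symmetric] if_distrib cong: if_cong)

lemma size_le_sum: "0 \<notin># M \<Longrightarrow> size M \<le> sum_mset M"
  by (induction M) auto

lemma geom_partial_le:
  fixes a :: real assumes "0 \<le> a" "a < 1"
  shows "(\<Sum>j<n. a ^ j) \<le> 1 / (1 - a)"
proof -
  have "a * a^n \<le> a^n" using assms by (intro mult_left_le_one_le) auto
  thus ?thesis using assms by (simp add: sum_gp_strict field_simps)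
qed

lemma inv_le_exp:
  fixes a :: real assumes "0 \<le> a" "a < 1"
  shows "1 / (1 - a) \<le> exp (a / (1 - a))"
proof -
  have "1 / (1 - a) = 1 + a / (1 - a)" using assms by (simp add: field_simps)
  also have "\<dots> \<le> exp (a / (1 - a))" by (rule exp_ge_add_one_self)
  finally show ?thesis .
qed

lemma GL:
  fixes \<sigma> :: real assumes s0: "0 \<le> \<sigma>" and s1: "\<sigma> < 1"
  shows "(\<lambda>M. \<sigma> ^ sum_mset M) summable_on PM"
proof (rule nonneg_bdd_above_summable_on)
  show "\<And>x. x \<in> PM \<Longrightarrow> 0 \<le> \<sigma> ^ sum_mset x" using s0 by simp
  show "bdd_above (sum (\<lambda>M. \<sigma> ^ sum_mset M) ` {F. F \<subseteq> PM \<and> finite F})"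
  proof (rule bdd_aboveI, clarify)
    fix S assume SP: "S \<subseteq> PM" and fS: "finite S"
    define K where "K = (\<Sum>M\<in>S. sum_mset M)"
    define A where "A = {1..K}"
    define G where "G = (\<lambda>f. \<Sum>k\<in>A. replicate_mset (f k) k)"
    define h where "h = (\<lambda>M. \<sigma> ^ sum_mset M)"
    have finA: "finite A" by (simp add: A_def)
    have Ssub: "S \<subseteq> G ` PiE A (\<lambda>_. {0..K})"
    proof
      fix M assume MS: "M \<in> S"
      have sK: "sum_mset M \<le> K" unfolding K_def using MS fS
        by (metis member_le_sum zero_le)
      have setA: "set_mset M \<subseteq> A"
      proof
        fix k assume "k \<in># M"
        hence "k \<le> sum_mset M" by (metis sum_mset.remove le_add1)
        moreover have "k \<noteq> 0" using \<open>k \<in># M\<close> MS SP by (metis PM_def mem_Collect_eq subsetD)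
        ultimately show "k \<in> A" using sK by (auto simp: A_def)
      qed
      have cK: "count M k \<le> K" for k
      proof -
        have "count M k \<le> size M" by (simp add: count_le_size)  
        also have "size M \<le> sum_mset M"
          using MS SP by (intro size_le_sum) (metis PM_def mem_Collect_eq subsetD)
        finally show ?thesis using sK by simp
      qed
      let ?f = "restrict (count M) A"
      have "?f \<in> PiE A (\<lambda>_. {0..K})" using cK by auto
      moreover have "G ?f = M"
        by (rule multiset_eqI) (use setA finA in \<open>auto simp: G_def count_sum_repl count_eq_zero_iff\<close>)
      ultimately show "M \<in> G ` PiE A (\<lambda>_. {0..K})" by (metis image_eqI)
    qed
    have finP: "finite (PiE A (\<lambda>_. {0..K}))" using finA by (intro finite_PiE) auto
    have "sum h S \<le> sum h (G ` PiE A (\<lambda>_. {0..K}))"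
      using Ssub finP s0 by (intro sum_mono2) (auto simp: h_def)
    also have "\<dots> \<le> sum (h \<circ> G) (PiE A (\<lambda>_. {0..K}))"
      using finP s0 by (intro sum_image_le) (auto simp: h_def)
    also have "\<dots> = (\<Sum>f\<in>PiE A (\<lambda>_. {0..K}). \<Prod>k\<in>A. (\<sigma>^k) ^ f k)"
      by (intro sum.cong refl) (simp add: h_def G_def sum_mset_sum_repl power_sum power_mult[symmetric] mult.commute)
    also have "\<dots> = (\<Prod>k\<in>A. \<Sum>j\<in>{0..K}. (\<sigma>^k) ^ j)"
      by (rule prod_sum_PiE[symmetric]) (use finA in auto)
    also have "\<dots> \<le> (\<Prod>k\<in>A. exp (\<sigma>^k / (1 - \<sigma>)))"
    proof (rule prod_mono, safe)
      fix k assume "k \<in> A"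
      hence k1: "1 \<le> k" by (simp add: A_def)
      have a0: "0 \<le> \<sigma>^k" using s0 by simp
      have a1: "\<sigma>^k \<le> \<sigma>" using power_decreasing[of 1 k \<sigma>] s0 s1 k1 by simp
      show "0 \<le> (\<Sum>j\<in>{0..K}. (\<sigma> ^ k) ^ j)" using s0 by (intro sum_nonneg) auto
      have "(\<Sum>j\<in>{0..K}. (\<sigma> ^ k) ^ j) = (\<Sum>j<Suc K. (\<sigma> ^ k) ^ j)" by (intro sum.cong) auto
      also have "\<dots> \<le> 1 / (1 - \<sigma>^k)" using a0 a1 s1 by (intro geom_partial_le) auto
      also have "\<dots> \<le> exp (\<sigma>^k / (1 - \<sigma>^k))" using a0 a1 s1 by (intro inv_le_exp) auto
      also have "\<dots> \<le> exp (\<sigma>^k / (1 - \<sigma>))"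
      proof -
        have "\<sigma>^k / (1 - \<sigma>^k) \<le> \<sigma>^k / (1 - \<sigma>)"
          using a0 a1 s1 by (intro divide_left_mono) (auto intro: mult_pos_pos)
        thus ?thesis by simp
      qed
      finally show "(\<Sum>j\<in>{0..K}. (\<sigma> ^ k) ^ j) \<le> exp (\<sigma>^k / (1 - \<sigma>))" .
    qed
    also have "\<dots> = exp (\<Sum>k\<in>A. \<sigma>^k / (1 - \<sigma>))" using finA by (simp add: exp_sum)
    also have "\<dots> \<le> exp (1 / (1 - \<sigma>) / (1 - \<sigma>))"
    proof -
      have "(\<Sum>k\<in>A. \<sigma>^k) \<le> (\<Sum>k<Suc K. \<sigma>^k)" using s0
        by (intro sum_mono2) (auto simp: A_def)
      also have "\<dots> \<le> 1 / (1 - \<sigma>)" using s0 s1 by (rule geom_partial_le)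
      finally have "(\<Sum>k\<in>A. \<sigma>^k) / (1 - \<sigma>) \<le> 1 / (1 - \<sigma>) / (1 - \<sigma>)"
        using s1 by (intro divide_right_mono) auto
      thus ?thesis by (simp add: sum_divide_distrib)
    qed
    finally show "sum (\<lambda>M. \<sigma> ^ sum_mset M) S \<le> exp (1 / (1 - \<sigma>) / (1 - \<sigma>))"
      by (simp add: h_def)
  qed
qed

lemma pm_nonneg:
  fixes f :: "nat \<Rightarrow> real"
  assumes "\<And>k. k \<in># M \<Longrightarrow> 0 \<le> f k"
  shows "0 \<le> prod_mset (image_mset f M)"
  using assms by (induction M) auto

lemma sm_nonneg:
  fixes f :: "nat \<Rightarrow> real"
  assumes "\<And>k. k \<in># M \<Longrightarrow> 0 \<le> f k"
  shows "0 \<le> sum_mset (image_mset f M)"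
  using assms by (induction M) auto

lemma pm_mono:
  fixes f g :: "nat \<Rightarrow> real"
  assumes "\<And>k. k \<in># M \<Longrightarrow> 0 \<le> f k \<and> f k \<le> g k"
  shows "prod_mset (image_mset f M) \<le> prod_mset (image_mset g M)"
  using assms
proof (induction M)
  case (add x M)
  have "0 \<le> prod_mset (image_mset f M)" using add.prems by (intro pm_nonneg) auto
  moreover have "0 \<le> g x" using add.prems[of x] by auto
  ultimately show ?case using add by (auto intro!: mult_mono)
qed simp


lemma pm_distrib:
  fixes f g :: "nat \<Rightarrow> 'a::comm_monoid_mult"
  shows "prod_mset (image_mset (\<lambda>k. f k * g k) M) = prod_mset (image_mset f M) * prod_mset (image_mset g M)"
  by (induction M) (auto simp: ac_simps)

lemma pm_power_odd:
  fixes r :: "'a::comm_monoid_mult"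
  assumes "0 \<notin># M"
  shows "prod_mset (image_mset (\<lambda>k. r^(2*k-1)) M) = r^(2* sum_mset M - size M)"
  using assms
proof (induction M)
  case (add x M)
  have "size M \<le> sum_mset M" using add.prems by (intro size_le_sum) auto
  moreover have "x \<ge> 1" using add.prems by (cases x) auto
  ultimately have "2*x - 1 + (2* sum_mset M - size M) = 2* sum_mset (add_mset x M) - size (add_mset x M)"
    by simp
  thus ?case using add by (simp add: power_add[symmetric])
qed simp

lemma pm_power:
  fixes r :: "'a::comm_monoid_mult"
  shows "prod_mset (image_mset (\<lambda>k. r^k) M) = r^(sum_mset M)"
  by (induction M) (auto simp: power_add)

lemma pm_ge1:
  fixes f :: "nat \<Rightarrow> real"
  assumes "\<And>k. k \<in># M \<Longrightarrow> 1 \<le> f k"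
  shows "1 \<le> prod_mset (image_mset f M)"
  using assms
proof (induction M)
  case (add x M)
  have "1 \<le> prod_mset (image_mset f M)" "1 \<le> f x" using add by auto
  hence "1 * 1 \<le> f x * prod_mset (image_mset f M)" by (intro mult_mono) auto
  thus ?case by simp
qed simp

lemma pm_sum_le:
  fixes a :: "nat \<Rightarrow> real"
  assumes "\<And>k. k \<in># M \<Longrightarrow> 0 \<le> a k" "0 \<le> \<delta>"
  shows "1 + \<delta> * sum_mset (image_mset a M) \<le> prod_mset (image_mset (\<lambda>k. 1 + \<delta> * a k) M)"
  using assms
proof (induction M)
  case (add x M)
  let ?S = "sum_mset (image_mset a M)" and ?P = "prod_mset (image_mset (\<lambda>k. 1 + \<delta> * a k) M)"
  have ih: "1 + \<delta> * ?S \<le> ?P" using add by auto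
  have ax: "0 \<le> a x" using add by auto
  have S0: "0 \<le> ?S" using add.prems by (intro sm_nonneg) auto
  have "1 + \<delta> * (a x + ?S) \<le> (1 + \<delta> * a x) * (1 + \<delta> * ?S)"
    using ax S0 add.prems by (simp add: algebra_simps)
  also have "\<dots> \<le> (1 + \<delta> * a x) * ?P" using ih ax add.prems by (intro mult_left_mono) auto
  finally show ?case by simp
qed simp

lemma factor_bound:
  fixes R D \<delta> :: real
  assumes R1: "1 \<le> R" and d0: "0 < \<delta>" and D0: "0 \<le> D"
  shows "sum_mset (image_mset (\<lambda>k. R^(2*k-1)) M) + D
     \<le> (D + 1/\<delta>) * prod_mset (image_mset (\<lambda>k. (1+\<delta>) * R^(2*k-1)) M)"
proof -
  let ?S = "sum_mset (image_mset (\<lambda>k. R^(2*k-1)) M)"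
  let ?P = "prod_mset (image_mset (\<lambda>k. (1+\<delta>) * R^(2*k-1)) M)"
  have Rk: "1 \<le> R^(2*k-1)" for k using R1 by simp
  have "1 + \<delta> * ?S \<le> prod_mset (image_mset (\<lambda>k. 1 + \<delta> * R^(2*k-1)) M)"
    using R1 d0 by (intro pm_sum_le) auto
  also have "\<dots> \<le> ?P"
  proof (rule pm_mono)
    fix k show "0 \<le> 1 + \<delta> * R^(2*k-1) \<and> 1 + \<delta> * R^(2*k-1) \<le> (1+\<delta>) * R^(2*k-1)"
      using Rk[of k] d0 by (auto simp: algebra_simps)
  qed
  finally have h1: "1 + \<delta> * ?S \<le> ?P" .
  have P1: "1 \<le> ?P"
  proof (rule pm_ge1)
    fix k have "1 * 1 \<le> (1+\<delta>) * R^(2*k-1)" using Rk[of k] d0 by (intro mult_mono) auto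
    thus "1 \<le> (1+\<delta>) * R^(2*k-1)" by simp
  qed
  have "?S \<le> ?P / \<delta>" using h1 d0 by (simp add: field_simps)
  moreover have "D \<le> D * ?P" using P1 D0 by (simp add: mult_le_cancel_left1)
  ultimately show ?thesis using d0 by (simp add: algebra_simps)
qed

lemma prod_list_mono_real:
  fixes f g :: "'b \<Rightarrow> real"
  assumes "\<And>x. x \<in> set xs \<Longrightarrow> 0 \<le> f x \<and> f x \<le> g x"
  shows "prod_list (map f xs) \<le> prod_list (map g xs)"
  using assms
proof (induction xs)
  case (Cons a xs)
  have "0 \<le> prod_list (map f xs)" using Cons.prems by (intro prod_list_nonneg) auto
  moreover have "0 \<le> g a" using Cons.prems[of a] by auto
  ultimately show ?case using Cons by (auto intro!: mult_mono)
qed simp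

lemma prod_list_ge1:
  fixes Rs :: "real list"
  assumes "\<forall>R\<in>set Rs. 1 \<le> R" shows "1 \<le> prod_list Rs"
  using assms
proof (induction Rs)
  case (Cons a Rs)
  hence "1 * 1 \<le> a * prod_list Rs" by (intro mult_mono) auto
  thus ?case by simp
qed simp

lemma prod_list_pm:
  fixes c d :: real
  shows "prod_list (map (\<lambda>R. c * prod_mset (image_mset (\<lambda>k. d * R^(2*k-1)) M)) Rs)
     = c ^ length Rs * prod_mset (image_mset (\<lambda>k. d ^ length Rs * (prod_list Rs)^(2*k-1)) M)"
proof (induction Rs)
  case Nil
  then show ?case by (induction M) auto
next
  case (Cons a Rs)
  have "prod_list (map (\<lambda>R. c * prod_mset (image_mset (\<lambda>k. d * R^(2*k-1)) M)) (a # Rs))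
     = (c * prod_mset (image_mset (\<lambda>k. d * a^(2*k-1)) M)) *
       (c ^ length Rs * prod_mset (image_mset (\<lambda>k. d ^ length Rs * (prod_list Rs)^(2*k-1)) M))"
    using Cons by simp
  also have "\<dots> = c ^ length (a # Rs) * prod_mset (image_mset (\<lambda>k. (d * a^(2*k-1)) * (d ^ length Rs * (prod_list Rs)^(2*k-1))) M)"
    by (simp only: pm_distrib) (simp add: ac_simps)
  also have "\<dots> = c ^ length (a # Rs) * prod_mset (image_mset (\<lambda>k. d ^ length (a # Rs) * (prod_list (a # Rs))^(2*k-1)) M)"
    by (simp add: power_mult_distrib ac_simps)
  finally show ?case .
qed

lemma BL:
  fixes r D :: real and Rs :: "real list"
  assumes r0: "0 \<le> r" and R1: "\<forall>R\<in>set Rs. 1 \<le> R" and rho: "r * prod_list Rs < 1" and D0: "0 \<le> D"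
  shows "(\<lambda>M. r ^ (2* sum_mset M - size M) *
            prod_list (map (\<lambda>R. sum_mset (image_mset (\<lambda>k. R^(2*k-1)) M) + D) Rs)) summable_on PM"
proof -
  define n where "n = length Rs"
  define P where "P = prod_list Rs"
  define \<rho> where "\<rho> = r * P"
  have P1: "1 \<le> P" unfolding P_def using R1 by (rule prod_list_ge1)
  have rho0: "0 \<le> \<rho>" using r0 P1 by (simp add: \<rho>_def)
  have rho1: "\<rho> < 1" using rho by (simp add: \<rho>_def P_def)
  have "((\<lambda>d. (1+d)^n * \<rho>) \<longlongrightarrow> (1+0)^n * \<rho>) (at_right 0)" by (intro tendsto_intros)
  hence "eventually (\<lambda>d. (1+d)^n * \<rho> < 1) (at_right (0::real))"
    using rho1 by (intro order_tendstoD(2)) auto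
  then obtain b where b0: "b > 0" and hb: "\<And>y. y > 0 \<Longrightarrow> y < b \<Longrightarrow> (1+y)^n * \<rho> < 1"
    unfolding eventually_at_right_field by auto
  define \<delta> where "\<delta> = b / 2"
  have d0: "\<delta> > 0" and sig1: "(1+\<delta>)^n * \<rho> < 1" using b0 hb[of \<delta>] by (auto simp: \<delta>_def)
  define \<sigma> where "\<sigma> = (1+\<delta>)^n * \<rho>"
  have s0: "0 \<le> \<sigma>" using d0 rho0 by (simp add: \<sigma>_def)
  have s1: "\<sigma> < 1" using sig1 by (simp add: \<sigma>_def)
  define C where "C = (D + 1/\<delta>)^n"
  have C0: "0 \<le> C" using d0 D0 by (simp add: C_def)
  show ?thesis
  proof (rule summable_on_comparison_test)
    show "(\<lambda>M. C * \<sigma> ^ sum_mset M) summable_on PM"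
      by (intro summable_on_cmult_right GL s0 s1)
  next
    fix M assume MP: "M \<in> PM"
    have M0: "0 \<notin># M" using MP by (simp add: PM_def)
    have Snn: "0 \<le> sum_mset (image_mset (\<lambda>k. R^(2*k-1)) M) + D" if "R \<in> set Rs" for R
    proof -
      have "0 \<le> R" using R1 that by fastforce
      thus ?thesis using D0 by (intro add_nonneg_nonneg sm_nonneg) auto
    qed
    show "0 \<le> r ^ (2* sum_mset M - size M) *
            prod_list (map (\<lambda>R. sum_mset (image_mset (\<lambda>k. R^(2*k-1)) M) + D) Rs)"
      using r0 Snn by (intro mult_nonneg_nonneg prod_list_nonneg) auto
    have "prod_list (map (\<lambda>R. sum_mset (image_mset (\<lambda>k. R^(2*k-1)) M) + D) Rs)
       \<le> prod_list (map (\<lambda>R. (D + 1/\<delta>) * prod_mset (image_mset (\<lambda>k. (1+\<delta>) * R^(2*k-1)) M)) Rs)"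
    proof (rule prod_list_mono_real)
      fix R assume RR: "R \<in> set Rs"
      show "0 \<le> sum_mset (image_mset (\<lambda>k. R^(2*k-1)) M) + D \<and>
        sum_mset (image_mset (\<lambda>k. R^(2*k-1)) M) + D \<le> (D + 1/\<delta>) * prod_mset (image_mset (\<lambda>k. (1+\<delta>) * R^(2*k-1)) M)"
        using Snn[OF RR] factor_bound[of R \<delta> D M] R1 RR d0 D0 by auto
    qed
    also have "\<dots> = C * prod_mset (image_mset (\<lambda>k. (1+\<delta>)^n * P^(2*k-1)) M)"
      unfolding C_def n_def P_def by (rule prod_list_pm)
    finally have h1: "prod_list (map (\<lambda>R. sum_mset (image_mset (\<lambda>k. R^(2*k-1)) M) + D) Rs)
        \<le> C * prod_mset (image_mset (\<lambda>k. (1+\<delta>)^n * P^(2*k-1)) M)" .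
    have "r ^ (2* sum_mset M - size M) *
            prod_list (map (\<lambda>R. sum_mset (image_mset (\<lambda>k. R^(2*k-1)) M) + D) Rs)
       \<le> prod_mset (image_mset (\<lambda>k. r^(2*k-1)) M) * (C * prod_mset (image_mset (\<lambda>k. (1+\<delta>)^n * P^(2*k-1)) M))"
    proof -
      have eq: "r ^ (2 * sum_mset M - size M) = prod_mset (image_mset (\<lambda>k. r^(2*k-1)) M)"
        by (rule pm_power_odd[OF M0, symmetric])
      have nn: "0 \<le> prod_mset (image_mset (\<lambda>k. r^(2*k-1)) M)" using r0 by (intro pm_nonneg) auto
      show ?thesis unfolding eq by (rule mult_left_mono[OF h1 nn])
    qed
    also have "\<dots> = C * (prod_mset (image_mset (\<lambda>k. r^(2*k-1)) M) * prod_mset (image_mset (\<lambda>k. (1+\<delta>)^n * P^(2*k-1)) M))"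
      by (simp only: ac_simps)
    also have "\<dots> = C * prod_mset (image_mset (\<lambda>k. r^(2*k-1) * ((1+\<delta>)^n * P^(2*k-1))) M)"
      by (simp only: pm_distrib)
    also have "\<dots> = C * prod_mset (image_mset (\<lambda>k. (1+\<delta>)^n * \<rho>^(2*k-1)) M)"
    proof -
      have "(\<lambda>k. r^(2*k-1) * ((1+\<delta>)^n * P^(2*k-1))) = (\<lambda>k. (1+\<delta>)^n * \<rho>^(2*k-1))"
        by (rule ext) (simp add: \<rho>_def power_mult_distrib)
      thus ?thesis by simp
    qed
    also have "\<dots> \<le> C * prod_mset (image_mset (\<lambda>k. \<sigma>^k) M)"
    proof (intro mult_left_mono C0 pm_mono conjI)
      fix k assume "k \<in># M"
      hence k1: "1 \<le> k" using M0 by (cases k) auto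
      have a1: "1 \<le> (1+\<delta>)^n" using d0 by simp
      show "0 \<le> (1+\<delta>)^n * \<rho>^(2*k-1)" using d0 rho0 by simp
      have "\<rho>^(2*k-1) \<le> \<rho>^k" using rho0 rho1 k1 by (intro power_decreasing) auto
      moreover have "(1+\<delta>)^n \<le> ((1+\<delta>)^n)^k" using a1 k1 power_increasing[of 1 k "(1+\<delta>)^n"] by simp
      ultimately have "(1+\<delta>)^n * \<rho>^(2*k-1) \<le> ((1+\<delta>)^n)^k * \<rho>^k"
        using rho0 a1 by (intro mult_mono) auto
      thus "(1+\<delta>)^n * \<rho>^(2*k-1) \<le> \<sigma>^k" by (simp add: \<sigma>_def power_mult_distrib)
    qed
    also have "\<dots> = C * \<sigma> ^ sum_mset M" by (simp add: pm_power)
    finally show "r ^ (2* sum_mset M - size M) *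
            prod_list (map (\<lambda>R. sum_mset (image_mset (\<lambda>k. R^(2*k-1)) M) + D) Rs) \<le> C * \<sigma> ^ sum_mset M" .
  qed
qed

lemma sum_count_mset:
  fixes f :: "nat \<Rightarrow> 'a::comm_semiring_1"
  shows "(\<Sum>k\<in>set_mset M. of_nat (count M k) * f k) = sum_mset (image_mset f M)"
proof (induction M)
  case (add x M)
  have "(\<Sum>k\<in>set_mset (add_mset x M). of_nat (count (add_mset x M) k) * f k)
      = (\<Sum>k\<in>set_mset (add_mset x M). of_nat (count M k) * f k + (if k = x then f k else 0))"
    by (intro sum.cong) (auto simp: algebra_simps)
  also have "\<dots> = (\<Sum>k\<in>set_mset (add_mset x M). of_nat (count M k) * f k) + f x"
    by (simp add: sum.distrib sum.delta)
  also have "(\<Sum>k\<in>set_mset (add_mset x M). of_nat (count M k) * f k) = (\<Sum>k\<in>set_mset M. of_nat (count M k) * f k)"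
    by (rule sum.mono_neutral_right) (auto simp: not_in_iff)
  finally show ?case using add by (simp add: add.commute)
qed simp

lemma FS:
  fixes f :: "nat \<Rightarrow> 'a::{comm_semiring_1, topological_comm_monoid_add}"
  assumes "set_mset M \<subseteq> A"
  shows "((\<lambda>k. of_nat (count M k) * f k) has_sum sum_mset (image_mset f M)) A"
proof -
  have "((\<lambda>k. of_nat (count M k) * f k) has_sum (\<Sum>k\<in>set_mset M. of_nat (count M k) * f k)) (set_mset M)"
    by (rule has_sum_finite) simp
  hence "((\<lambda>k. of_nat (count M k) * f k) has_sum sum_mset (image_mset f M)) (set_mset M)"
    by (simp add: sum_count_mset)
  thus ?thesis
    by (subst (asm) has_sum_cong_neutral[where T = A]) (use assms in \<open>auto simp: not_in_iff\<close>)
qed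

lemma GS:
  fixes x :: "'a::{real_normed_field, banach}"
  assumes "norm x < 1"
  shows "((\<lambda>k. x^(2*k-1)) has_sum x / (1 - x^2)) {1..}"
proof -
  have n2: "norm (x^2) < 1" using assms by (simp add: norm_power power_less_one_iff)
  have s: "(\<lambda>j. x * (x^2)^j) sums (x * (1 / (1 - x^2)))"
    by (intro sums_mult geometric_sums n2)
  have "summable (\<lambda>j. norm (x * (x^2)^j))"
  proof -
    have "summable (\<lambda>j. norm x * (norm (x^2))^j)"
      using n2 by (intro summable_mult summable_geometric) simp
    thus ?thesis by (simp add: norm_mult norm_power)
  qed
  hence "((\<lambda>j. x * (x^2)^j) has_sum (x * (1 / (1 - x^2)))) UNIV"
    using s by (rule norm_summable_imp_has_sum)
  hence "((\<lambda>j. x^(2 * Suc j - 1)) has_sum x / (1 - x^2)) UNIV"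
    by (simp add: power_mult[symmetric] mult_2)
  moreover have "bij_betw Suc UNIV {1::nat..}"
    by (rule bij_betwI[where g = "\<lambda>n. n - 1"]) auto
  ultimately show ?thesis using has_sum_reindex_bij_betw[of Suc UNIV "{1..}" "\<lambda>k. x^(2*k-1)"] by simp
qed

lemma cc_eq: "x \<noteq> 0 \<Longrightarrow> cc x = x / (1 - x^2)"
  by (simp add: cc_def field_simps power2_eq_square)

definition Rn :: "complex \<Rightarrow> real" where "Rn z = max (norm z) (inverse (norm z))"

lemma Rn_ge1: "z \<noteq> 0 \<Longrightarrow> 1 \<le> Rn z"
proof (cases "norm z \<le> 1")
  case True
  assume "z \<noteq> 0"
  hence "1 \<le> inverse (norm z)" using True by (intro one_le_inverse) auto
  thus ?thesis unfolding Rn_def by (rule max.coboundedI2)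
next
  case False thus ?thesis unfolding Rn_def by (intro max.coboundedI1) simp
qed

lemma Rn_inverse: "Rn (inverse z) = Rn z"
  unfolding Rn_def by (simp add: norm_inverse max.commute)

lemma norm_le_Rn: "norm z \<le> Rn z" and norm_inv_le_Rn: "norm (inverse z) \<le> Rn z"
  unfolding Rn_def by (auto simp: norm_inverse)

lemma norm_gg: "norm (gg y k) \<le> 2 * Rn y ^ (2*k-1)"
proof -
  have "norm (gg y k) \<le> norm y ^ (2*k-1) + norm (inverse y) ^ (2*k-1)"
    unfolding gg_def by (metis norm_power norm_triangle_ineq4)
  also have "\<dots> \<le> Rn y ^ (2*k-1) + Rn y ^ (2*k-1)"
    by (intro add_mono power_mono norm_le_Rn norm_inv_le_Rn) auto
  finally show ?thesis by simp
qed

lemma norm_sum_mset_le: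
  fixes f :: "nat \<Rightarrow> complex" and g :: "nat \<Rightarrow> real"
  assumes "\<And>k. norm (f k) \<le> g k"
  shows "norm (sum_mset (image_mset f M)) \<le> sum_mset (image_mset g M)"
proof (induction M)
  case (add x M)
  have "norm (f x + sum_mset (image_mset f M)) \<le> norm (f x) + norm (sum_mset (image_mset f M))"
    by (rule norm_triangle_ineq)
  also have "\<dots> \<le> g x + sum_mset (image_mset g M)" using add assms by (intro add_mono) auto
  finally show ?case by simp
qed simp

lemma sum_mset_cmult:
  fixes f :: "nat \<Rightarrow> 'a::comm_semiring_1"
  shows "sum_mset (image_mset (\<lambda>k. c * f k) M) = c * sum_mset (image_mset f M)"
  by (induction M) (auto simp: algebra_simps)

abbreviation SR :: "real \<Rightarrow> nat multiset \<Rightarrow> real" where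
  "SR R M \<equiv> sum_mset (image_mset (\<lambda>k. R^(2*k-1)) M)"

lemma SR_nonneg: "0 \<le> R \<Longrightarrow> 0 \<le> SR R M"
  by (rule sm_nonneg) simp

lemma SR_one: "SR 1 M = of_nat (size M)"
  by (induction M) auto

lemma norm_CEm: 
  assumes "norm (cc y) \<le> D"
  shows "norm (CEm y M) \<le> 2 * (SR (Rn y) M + D)"
proof -
  have "norm (CEm y M) \<le> norm (sum_mset (image_mset (gg y) M)) + norm (cc y)"
    unfolding CEm_def by (rule norm_triangle_ineq)
  also have "norm (sum_mset (image_mset (gg y) M)) \<le> sum_mset (image_mset (\<lambda>k. 2 * Rn y ^ (2*k-1)) M)"
    by (rule norm_sum_mset_le) (rule norm_gg)
  also have "\<dots> = 2 * SR (Rn y) M" by (rule sum_mset_cmult)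
  finally have "norm (CEm y M) \<le> 2 * SR (Rn y) M + norm (cc y)" by simp
  moreover have "0 \<le> SR (Rn y) M" by (intro SR_nonneg) (simp add: Rn_def le_max_iff_disj)
  moreover have "2 * SR (Rn y) M + norm (cc y) \<le> 2 * (SR (Rn y) M + D)" using assms norm_ge_zero[of "cc y"] by (simp only: distrib_left)
  ultimately show ?thesis by (meson order_trans)
qed

lemma norm_Fm:
  assumes "\<forall>y\<in>set ys. norm (cc y) \<le> D"
  shows "norm (Fm ys M) \<le> 2 ^ length ys * prod_list (map (\<lambda>R. SR R M + D) (map Rn ys))"
  using assms
proof (induction ys)
  case Nil
  then show ?case by (simp add: Fm_def)
next
  case (Cons y ys)
  have D0: "0 \<le> D" using Cons.prems norm_ge_zero[of "cc y"] by (meson list.set_intros(1) order_trans)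
  have h1: "norm (CEm y M) \<le> 2 * (SR (Rn y) M + D)" using Cons.prems by (intro norm_CEm) auto
  have "0 \<le> SR (Rn y) M" by (intro SR_nonneg) (simp add: Rn_def le_max_iff_disj)
  hence h0: "0 \<le> 2 * (SR (Rn y) M + D)" using D0 by simp
  have h2: "norm (Fm ys M) \<le> 2 ^ length ys * prod_list (map (\<lambda>R. SR R M + D) (map Rn ys))"
    using Cons by auto
  have "norm (Fm (y # ys) M) = norm (CEm y M) * norm (Fm ys M)" by (simp add: Fm_def norm_mult)
  also have "\<dots> \<le> (2 * (SR (Rn y) M + D)) * (2 ^ length ys * prod_list (map (\<lambda>R. SR R M + D) (map Rn ys)))"
    using h1 h2 h0 by (intro mult_mono) auto
  finally show ?case by (simp add: algebra_simps)
qed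

lemma norm_Wm: "norm (Wm p M) = norm p ^ (2 * sum_mset M - size M)"
  by (simp add: Wm_def norm_power)

lemma Wm_add: "0 \<notin># N \<Longrightarrow> 1 \<le> k \<Longrightarrow> Wm p (N + {#k#}) = p^(2*k-1) * Wm p N"
proof -
  assume N0: "0 \<notin># N" and k1: "1 \<le> k"
  have "size N \<le> sum_mset N" using N0 by (rule size_le_sum)
  hence "2 * sum_mset (N + {#k#}) - size (N + {#k#}) = (2*k-1) + (2 * sum_mset N - size N)"
    using k1 by simp
  thus ?thesis by (simp add: Wm_def power_add)
qed

lemma CEm_add: "CEm y (N + {#k#}) = CEm y N + gg y k"
  by (simp add: CEm_def)

definition EP :: "complex \<Rightarrow> complex \<Rightarrow> complex list \<Rightarrow> nat multiset \<Rightarrow> nat \<Rightarrow> complex" where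
  "EP p x ys N k = Wm p N * of_nat (count N k + 1) *
     (x^(2*k-1) * Fm ys N - p^(2*k-1) * inverse x^(2*k-1) * Fm ys (N + {#k#}))"

lemma has_sum_diff':
  fixes f g :: "'b \<Rightarrow> complex"
  assumes "(f has_sum a) A" "(g has_sum b) A"
  shows "((\<lambda>x. f x - g x) has_sum (a - b)) A"
proof -
  have "((\<lambda>x. (-1) * g x) has_sum ((-1) * b)) A" using assms(2) by (rule has_sum_cmult_right)
  from has_sum_add[OF assms(1) this] show ?thesis by simp
qed

lemma SR_Rn_nonneg: "0 \<le> SR (Rn y) M"
  by (intro SR_nonneg) (simp add: Rn_def le_max_iff_disj)

lemma le_sum_list_nonneg:
  fixes f :: "'b \<Rightarrow> real"
  assumes "y \<in> set ys" "\<And>z. 0 \<le> f z"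
  shows "f y \<le> sum_list (map f ys)"
  using assms
proof (induction ys)
  case (Cons a ys)
  show ?case
  proof (cases "y = a")
    case True
    have "0 \<le> sum_list (map f ys)" using Cons.prems by (intro sum_list_nonneg) auto
    thus ?thesis using True by simp
  next
    case False
    hence "f y \<le> sum_list (map f ys)" using Cons by auto
    thus ?thesis using Cons.prems(2)[of a] by simp
  qed
qed simp

lemma mono_aux:
  fixes a f F u v w :: real
  assumes "0 \<le> a" "0 \<le> f" "f \<le> F" "0 \<le> u" "u \<le> v" "1 \<le> w"
  shows "a * f * u \<le> a * F * v * w"
proof -
  have "a * f * u \<le> a * F * v" using assms by (intro mult_mono mult_left_mono) auto
  also have "\<dots> \<le> a * F * v * w"
  proof -
    have "0 \<le> a * F * v" using assms by simp
    thus ?thesis using assms(6) by (simp add: mult_le_cancel_left1)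
  qed
  finally show ?thesis .
qed

lemma Eplus:
  fixes p x :: complex and ys :: "complex list"
  assumes p0: "p \<noteq> 0" and x0: "x \<noteq> 0" and x1: "norm x < 1" and ys0: "\<forall>y\<in>set ys. y \<noteq> 0"
    and rho: "norm p * (Rn x * prod_list (map Rn ys)) < 1"
  shows "((\<lambda>(N,k). EP p x ys N k) has_sum Tm p (x # ys)) (PM \<times> {1..})"
proof -
  define Q where "Q = PM \<times> {1::nat..}"
  define n where "n = length ys"
  define D where "D = 1 + sum_list (map (\<lambda>y. norm (cc y)) ys)"
  have "0 \<le> sum_list (map (\<lambda>y. norm (cc y)) ys)" by (rule sum_list_nonneg) auto
  hence D1: "1 \<le> D" unfolding D_def by simp
  have Dy: "\<forall>y\<in>set ys. norm (cc y) \<le> D"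
  proof
    fix y assume "y \<in> set ys"
    hence "norm (cc y) \<le> sum_list (map (\<lambda>y. norm (cc y)) ys)" by (rule le_sum_list_nonneg) simp
    thus "norm (cc y) \<le> D" by (simp add: D_def)
  qed
  define X where "X M = prod_list (map (\<lambda>R. SR R M + D) (map Rn ys))" for M
  define B where "B M = norm p ^ (2 * sum_mset M - size M) * ((SR (Rn x) M + D) * ((of_nat (size M) + D) * X M))" for M
  have Bs: "B summable_on PM"
  proof -
    have "(\<lambda>M. norm p ^ (2 * sum_mset M - size M) *
            prod_list (map (\<lambda>R. SR R M + D) (Rn x # 1 # map Rn ys))) summable_on PM"
    proof (rule BL)
      show "\<forall>R\<in>set (Rn x # 1 # map Rn ys). 1 \<le> R" using x0 ys0 by (auto intro: Rn_ge1)
      show "norm p * prod_list (Rn x # 1 # map Rn ys) < 1" using rho by simp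
    qed (use D1 in auto)
    thus ?thesis by (simp add: B_def[abs_def] X_def SR_one)
  qed
  have X0: "0 \<le> X M" for M
  proof -
    have "0 \<le> SR (Rn y) M + D" for y using SR_Rn_nonneg[of y M] D1 by simp
    thus ?thesis unfolding X_def by (intro prod_list_nonneg) auto
  qed
  have SRx0: "0 \<le> SR (Rn x) M" for M by (intro SR_nonneg) (simp add: Rn_def le_max_iff_disj)
  have normF: "norm (Fm ys M) \<le> 2 ^ n * X M" for M
    unfolding X_def n_def by (rule norm_Fm[OF Dy])
  have K1: "norm (Wm p M) * norm (Fm ys M) * (of_nat (size M) + 1) \<le> 2 ^ n * B M" for M
  proof -
    have "norm (Wm p M) * norm (Fm ys M) * (of_nat (size M) + 1)
        \<le> norm (Wm p M) * (2^n * X M) * (of_nat (size M) + D) * (SR (Rn x) M + D)"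
      using normF[of M] D1 SRx0[of M] by (intro mono_aux) auto
    thus ?thesis by (simp add: B_def norm_Wm ac_simps)
  qed
  have K2: "norm (Wm p M) * norm (Fm ys M) * SR (Rn x) M \<le> 2 ^ n * B M" for M
  proof -
    have "norm (Wm p M) * norm (Fm ys M) * SR (Rn x) M
        \<le> norm (Wm p M) * (2^n * X M) * (SR (Rn x) M + D) * (of_nat (size M) + D)"
      using normF[of M] D1 SRx0[of M] by (intro mono_aux) auto
    thus ?thesis by (simp add: B_def norm_Wm ac_simps)
  qed
  have Bnn: "0 \<le> B M" for M unfolding B_def using X0[of M] SRx0[of M] D1 by simp

  define a1 where "a1 = (\<lambda>(M,k). Wm p M * Fm ys M * (of_nat (count M k + 1) * x^(2*k-1)))"
  define a2 where "a2 = (\<lambda>(M,k). Wm p M * Fm ys M * (of_nat (count M k) * inverse x^(2*k-1)))"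
  define cx where "cx = norm x / (1 - (norm x)^2)"
  have cx0: "0 \<le> cx"
  proof -
    have "norm x * norm x \<le> norm x * 1" using x1 by (intro mult_left_mono) auto
    hence "norm x * norm x < 1" using x1 by linarith
    thus ?thesis unfolding cx_def power2_eq_square by simp
  qed

  have a1s: "a1 summable_on Q"
  proof -
    define b1 where "b1 = (\<lambda>(M::nat multiset,k::nat). norm (Wm p M) * norm (Fm ys M) * (of_nat (size M) + 1) * norm x^(2*k-1))"
    have "b1 summable_on Sigma PM (\<lambda>_. {1..})"
    proof (rule summable_on_SigmaI)
      fix M :: "nat multiset" assume "M \<in> PM"
      have "((\<lambda>k. norm x^(2*k-1)) has_sum cx) {1..}" unfolding cx_def using x1 by (intro GS) simp
      thus "((\<lambda>k. b1 (M, k)) has_sum (norm (Wm p M) * norm (Fm ys M) * (of_nat (size M) + 1) * cx)) {1..}"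
        unfolding b1_def by (simp add: has_sum_cmult_right)
    next
      show "(\<lambda>M. norm (Wm p M) * norm (Fm ys M) * (of_nat (size M) + 1) * cx) summable_on PM"
      proof (rule summable_on_comparison_test)
        show "(\<lambda>M. 2^n * B M * cx) summable_on PM" using Bs by (intro summable_on_cmult_left summable_on_cmult_right)
        fix M assume "M \<in> PM"
        show "norm (Wm p M) * norm (Fm ys M) * (of_nat (size M) + 1) * cx \<le> 2^n * B M * cx"
          using K1[of M] cx0 by (intro mult_right_mono) auto
        show "0 \<le> norm (Wm p M) * norm (Fm ys M) * (of_nat (size M) + 1) * cx" using cx0 by simp
      qed
    next
      fix M k show "0 \<le> b1 (M,k)" by (simp add: b1_def)
    qed
    hence "(\<lambda>z. norm (b1 z)) summable_on Q" unfolding Q_def using summable_on_iff_abs_summable_on_real by auto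
    hence "(\<lambda>z. norm (a1 z)) summable_on Q"
    proof (rule Infinite_Sum.abs_summable_on_comparison_test)
      fix z assume "z \<in> Q"
      then obtain M k where z: "z = (M,k)" by (cases z)
      have "count M k \<le> size M" by (rule count_le_size)
      hence "of_nat (count M k + 1) \<le> (of_nat (size M) + 1 :: real)" by simp
      hence c1: "of_nat (count M k + 1) \<le> (of_nat (size M) + 1 :: real)" .
      have "norm (a1 z) = norm (Wm p M) * norm (Fm ys M) * of_nat (count M k + 1) * norm x^(2*k-1)"
        unfolding a1_def z by (simp add: norm_mult norm_power del: of_nat_Suc)
      also have "\<dots> \<le> norm (Wm p M) * norm (Fm ys M) * (of_nat (size M) + 1) * norm x^(2*k-1)"
        using c1 by (intro mult_right_mono mult_left_mono) auto
      finally have "norm (a1 z) \<le> b1 z" by (simp add: b1_def z)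
      thus "norm (a1 z) \<le> norm (b1 z)" by (simp add: b1_def z)
    qed
    thus ?thesis by (simp add: summable_on_iff_abs_summable_on_complex)
  qed

  have a2s: "a2 summable_on Q"
  proof -
    define b2 where "b2 = (\<lambda>(M::nat multiset,k::nat). norm (Wm p M) * norm (Fm ys M) * (of_nat (count M k) * Rn x^(2*k-1)))"
    have "b2 summable_on Sigma PM (\<lambda>_. {1..})"
    proof (rule summable_on_SigmaI)
      fix M :: "nat multiset" assume MP: "M \<in> PM"
      have "set_mset M \<subseteq> {1..}" using MP by (auto simp: PM_def Suc_le_eq intro: Nat.gr0I)
      hence "((\<lambda>k. of_nat (count M k) * Rn x^(2*k-1)) has_sum SR (Rn x) M) {1..}"
        by (rule FS)
      thus "((\<lambda>k. b2 (M, k)) has_sum (norm (Wm p M) * norm (Fm ys M) * SR (Rn x) M)) {1..}"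
        unfolding b2_def by (simp add: has_sum_cmult_right)
    next
      show "(\<lambda>M. norm (Wm p M) * norm (Fm ys M) * SR (Rn x) M) summable_on PM"
      proof (rule summable_on_comparison_test)
        show "(\<lambda>M. 2^n * B M) summable_on PM" using Bs by (intro summable_on_cmult_right)
        fix M assume "M \<in> PM"
        show "norm (Wm p M) * norm (Fm ys M) * SR (Rn x) M \<le> 2^n * B M" by (rule K2)
        show "0 \<le> norm (Wm p M) * norm (Fm ys M) * SR (Rn x) M" using SRx0[of M] by simp
      qed
    next
      fix M k show "0 \<le> b2 (M,k)" by (simp add: b2_def Rn_def le_max_iff_disj)
    qed
    hence "(\<lambda>z. norm (b2 z)) summable_on Q" unfolding Q_def using summable_on_iff_abs_summable_on_real by auto
    hence "(\<lambda>z. norm (a2 z)) summable_on Q"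
    proof (rule Infinite_Sum.abs_summable_on_comparison_test)
      fix z assume "z \<in> Q"
      then obtain M k where z: "z = (M,k)" by (cases z)
      have c1: "norm (inverse x^(2*k-1)) \<le> Rn x^(2*k-1)"
        unfolding norm_power by (intro power_mono norm_inv_le_Rn) auto
      have "norm (a2 z) = norm (Wm p M) * norm (Fm ys M) * (of_nat (count M k) * norm (inverse x^(2*k-1)))"
        unfolding a2_def z by (simp add: norm_mult)
      also have "\<dots> \<le> norm (Wm p M) * norm (Fm ys M) * (of_nat (count M k) * Rn x^(2*k-1))"
        using c1 by (intro mult_right_mono mult_left_mono) auto
      finally have "norm (a2 z) \<le> b2 z" by (simp add: b2_def z)
      thus "norm (a2 z) \<le> norm (b2 z)" by (simp add: b2_def z)
    qed
    thus ?thesis by (simp add: summable_on_iff_abs_summable_on_complex)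
  qed

  define a where "a = (\<lambda>z. a1 z - a2 z)"
  have aS: "(a has_sum (infsum a1 Q - infsum a2 Q)) Q" unfolding a_def
    using has_sum_infsum[OF a1s] has_sum_infsum[OF a2s] by (rule has_sum_diff')
  hence as: "a summable_on Q" by (rule has_sum_imp_summable)
  have fib: "((\<lambda>k. a (M, k)) has_sum (Wm p M * Fm (x # ys) M)) {1..}" if MP: "M \<in> PM" for M
  proof -
    have "set_mset M \<subseteq> {1..}" using MP by (auto simp: PM_def Suc_le_eq intro: Nat.gr0I)
    hence h1: "((\<lambda>k. of_nat (count M k) * gg x k) has_sum sum_mset (image_mset (gg x) M)) {1..}"
      by (rule FS)
    have h2: "((\<lambda>k. x^(2*k-1)) has_sum cc x) {1..}"
      using GS[OF x1] by (simp add: cc_eq[OF x0])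
    have "((\<lambda>k. of_nat (count M k) * gg x k + x^(2*k-1)) has_sum CEm x M) {1..}"
      unfolding CEm_def by (rule has_sum_add[OF h1 h2])
    hence "((\<lambda>k. Wm p M * Fm ys M * (of_nat (count M k) * gg x k + x^(2*k-1))) has_sum
             (Wm p M * Fm ys M * CEm x M)) {1..}"
      by (rule has_sum_cmult_right)
    moreover have "Wm p M * Fm ys M * (of_nat (count M k) * gg x k + x^(2*k-1)) = a (M,k)" for k
      unfolding a_def a1_def a2_def gg_def by (simp add: algebra_simps)
    moreover have "Wm p M * Fm ys M * CEm x M = Wm p M * Fm (x # ys) M"
      by (simp add: Fm_def)
    ultimately show ?thesis by simp
  qed
  have Ta: "(a has_sum Tm p (x # ys)) Q"
  proof -
    have "(a has_sum infsum a Q) Q" using as by (rule has_sum_infsum)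
    hence "((\<lambda>M. Wm p M * Fm (x # ys) M) has_sum infsum a Q) PM"
      unfolding Q_def by (rule has_sum_SigmaD) (rule fib)
    hence "Tm p (x # ys) = infsum a Q" unfolding Tm_def by (rule infsumI)
    thus ?thesis using \<open>(a has_sum infsum a Q) Q\<close> by simp
  qed
  define \<Phi> where "\<Phi> = (\<lambda>(N::nat multiset, k::nat). (N + {#k#}, k))"
  have injPhi: "inj_on \<Phi> Q" unfolding \<Phi>_def by (rule inj_onI) auto
  have PhiQ: "\<Phi> ` Q \<subseteq> Q" unfolding \<Phi>_def Q_def PM_def by auto
  have a2z: "a2 z = 0" if "z \<in> Q - \<Phi> ` Q" for z
  proof -
    obtain M k where z: "z = (M,k)" by (cases z)
    have "k \<notin># M"
    proof
      assume kM: "k \<in># M"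
      have "(M - {#k#}, k) \<in> Q" using that z unfolding Q_def PM_def by (auto dest: in_diffD)
      moreover have "\<Phi> (M - {#k#}, k) = z" using kM z by (simp add: \<Phi>_def)
      ultimately show False using that by (metis DiffD2 image_eqI)
    qed
    thus ?thesis by (simp add: a2_def z not_in_iff)
  qed
  have S2: "((a2 \<circ> \<Phi>) has_sum infsum a2 Q) Q"
  proof -
    have "(a2 has_sum infsum a2 Q) Q" using a2s by (rule has_sum_infsum)
    hence "(a2 has_sum infsum a2 Q) (\<Phi> ` Q)"
      by (subst (asm) has_sum_cong_neutral[where T = "\<Phi> ` Q"]) (use a2z PhiQ in auto)
    thus ?thesis by (subst (asm) has_sum_reindex[OF injPhi])
  qed
  have S1: "(a1 has_sum infsum a1 Q) Q" using a1s by (rule has_sum_infsum)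
  have "infsum a Q = infsum a1 Q - infsum a2 Q" using aS by (rule infsumI)
  hence TmEq: "Tm p (x # ys) = infsum a1 Q - infsum a2 Q" using Ta by (metis infsumI)
  have "((\<lambda>z. a1 z - (a2 \<circ> \<Phi>) z) has_sum Tm p (x # ys)) Q"
    unfolding TmEq by (rule has_sum_diff'[OF S1 S2])
  moreover have "a1 z - (a2 \<circ> \<Phi>) z = (\<lambda>(N,k). EP p x ys N k) z" if "z \<in> Q" for z
  proof -
    obtain N k where z: "z = (N,k)" by (cases z)
    have N0: "0 \<notin># N" and k1: "1 \<le> k" using that z by (auto simp: Q_def PM_def)
    show ?thesis
      unfolding z \<Phi>_def a1_def a2_def EP_def using Wm_add[OF N0 k1, of p]
      by (simp add: algebra_simps)
  qed
  ultimately show ?thesis unfolding Q_def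
    by (subst (asm) has_sum_cong[where g = "\<lambda>(N,k). EP p x ys N k"]) (auto simp: Q_def)
qed

lemma has_sum_finite_sum:
  fixes f :: "'i \<Rightarrow> 'b \<Rightarrow> complex"
  assumes "finite I" "\<And>i. i \<in> I \<Longrightarrow> (f i has_sum s i) A"
  shows "((\<lambda>x. \<Sum>i\<in>I. f i x) has_sum (\<Sum>i\<in>I. s i)) A"
  using assms
proof (induction I rule: finite_induct)
  case empty
  then show ?case by simp
next
  case (insert j I)
  have "((\<lambda>x. f j x + (\<Sum>i\<in>I. f i x)) has_sum (s j + (\<Sum>i\<in>I. s i))) A"
    using insert by (intro has_sum_add) auto
  thus ?case using insert by simp
qed

lemma sign_prod:
  fixes a :: "'i \<Rightarrow> complex"
  assumes "finite I"
  shows "(\<Prod>i\<in>I. if e i then a i else - a i) = (-1) ^ card {i\<in>I. \<not> e i} * (\<Prod>i\<in>I. a i)"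
  using assms
proof (induction I rule: finite_induct)
  case empty
  then show ?case by simp
next
  case (insert x F)
  have fin: "finite {i\<in>F. \<not> e i}" using insert by simp
  have c: "card {i\<in>insert x F. \<not> e i} = card {i\<in>F. \<not> e i} + (if e x then 0 else 1)"
  proof (cases "e x")
    case True
    hence "{i\<in>insert x F. \<not> e i} = {i\<in>F. \<not> e i}" by auto
    thus ?thesis using True by simp
  next
    case False
    hence "{i\<in>insert x F. \<not> e i} = insert x {i\<in>F. \<not> e i}" by auto
    thus ?thesis using False fin insert by simp
  qed
  have "(\<Prod>i\<in>insert x F. if e i then a i else - a i) = (if e x then a x else - a x) * ((-1) ^ card {i\<in>F. \<not> e i} * (\<Prod>i\<in>F. a i))"
    using insert by simp
  also have "\<dots> = (-1) ^ (card {i\<in>F. \<not> e i} + (if e x then 0 else 1)) * (\<Prod>i\<in>insert x F. a i)"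
    using insert by (cases "e x") (simp_all add: power_add)
  finally show ?case by (simp only: c)
qed

lemma sign_expand:
  fixes h :: "'i \<Rightarrow> bool \<Rightarrow> complex"
  assumes "finite I"
  shows "(\<Sum>e\<in>I \<rightarrow>\<^sub>E (UNIV::bool set). (-1) ^ card {i\<in>I. \<not> e i} * (\<Prod>i\<in>I. h i (e i)))
       = (\<Prod>i\<in>I. h i True - h i False)"
proof -
  have "(\<Prod>i\<in>I. h i True - h i False) = (\<Prod>i\<in>I. \<Sum>b\<in>(UNIV::bool set). if b then h i True else - h i False)"
    by (simp add: UNIV_bool)
  also have "\<dots> = (\<Sum>e\<in>I \<rightarrow>\<^sub>E (UNIV::bool set). \<Prod>i\<in>I. if e i then h i True else - h i False)"
    using assms by (rule prod_sum_PiE) simp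
  also have "\<dots> = (\<Sum>e\<in>I \<rightarrow>\<^sub>E (UNIV::bool set). (-1) ^ card {i\<in>I. \<not> e i} * (\<Prod>i\<in>I. h i (e i)))"
  proof (rule sum.cong[OF refl])
    fix e
    have "(\<Prod>i\<in>I. if e i then h i True else - h i False) = (\<Prod>i\<in>I. if e i then h i (e i) else - h i (e i))"
      by (rule prod.cong) auto
    also have "\<dots> = (-1) ^ card {i\<in>I. \<not> e i} * (\<Prod>i\<in>I. h i (e i))"
      using assms by (rule sign_prod)
    finally show "(\<Prod>i\<in>I. if e i then h i True else - h i False) = (-1) ^ card {i\<in>I. \<not> e i} * (\<Prod>i\<in>I. h i (e i))" .
  qed
  finally show ?thesis ..
qed

lemma tl_as_map: "ss \<noteq> [] \<Longrightarrow> tl ss = map (nth ss) [1..<length ss]"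
proof (cases ss)
  case (Cons a xs)
  have "map (nth ss) [1..<length ss] = map (nth ss) (map Suc [0..<length xs])"
    using Cons by (simp add: map_Suc_upt)
  also have "\<dots> = map (nth xs) [0..<length xs]" using Cons by simp
  also have "\<dots> = xs" by (rule map_nth)
  finally show ?thesis using Cons by simp
qed simp

lemma Fm_filter:
  "Fm (map (nth ss) (filter (\<lambda>j. j \<notin> I) [1..<n])) M = (\<Prod>j\<in>{1..<n} - I. CEm (ss ! j) M)"
proof -
  have "Fm (map (nth ss) (filter (\<lambda>j. j \<notin> I) [1..<n])) M
      = prod_list (map (\<lambda>j. CEm (ss ! j) M) (filter (\<lambda>j. j \<notin> I) [1..<n]))"
    by (simp add: Fm_def comp_def)
  also have "\<dots> = (\<Prod>j\<in>set (filter (\<lambda>j. j \<notin> I) [1..<n]). CEm (ss ! j) M)"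
    by (rule prod.distinct_set_conv_list[symmetric]) simp
  also have "set (filter (\<lambda>j. j \<notin> I) [1..<n]) = {1..<n} - I" by auto
  finally show ?thesis .
qed

lemma Fm_neg: "Fm (inverse u # rest) M = - Fm (u # rest) M"
proof -
  have "CEm (inverse u) M = - CEm u M"
  proof -
    have "image_mset (gg (inverse u)) M = image_mset (\<lambda>k. - gg u k) M"
      by (intro image_mset_cong) (simp add: gg_def)
    moreover have "sum_mset (image_mset (\<lambda>k. - gg u k) M) = - sum_mset (image_mset (gg u) M)"
      by (induction M) auto
    moreover have "cc (inverse u) = - cc u" by (simp add: cc_def divide_simps)
    ultimately show ?thesis by (simp add: CEm_def)
  qed
  thus ?thesis by (simp add: Fm_def)
qed

lemma CD_p: "conv_domain p xs \<Longrightarrow> p \<noteq> 0" by (simp add: conv_domain_def)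
lemma CD_nz: "conv_domain p xs \<Longrightarrow> z \<in> set xs \<Longrightarrow> z \<noteq> 0" by (auto simp: conv_domain_def)

lemma norm_choice_Rn: "norm (if 1 \<le> norm z then z else inverse z) = Rn z"
proof (cases "1 \<le> norm z")
  case True
  hence "inverse (norm z) \<le> 1" by (simp add: inverse_le_1_iff)
  hence "inverse (norm z) \<le> norm z" using True by linarith
  thus ?thesis using True by (simp add: Rn_def max_def)
next
  case False
  show ?thesis
  proof (cases "z = 0")
    case True thus ?thesis by (simp add: Rn_def)
  next
    case z0: False
    have "norm z < 1" using False by simp
    have "1 \<le> inverse (norm z)" using z0 \<open>norm z < 1\<close> by (intro one_le_inverse) auto
    hence "norm z \<le> inverse (norm z)" using \<open>norm z < 1\<close> by linarith
    thus ?thesis using False by (simp add: Rn_def max_def norm_inverse)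
  qed
qed

lemma CD_rho: assumes "conv_domain p xs" shows "norm p * prod_list (map Rn xs) < 1"
proof -
  define e where "e = (\<lambda>k. 1 \<le> norm (xs ! k))"
  have "norm (p * (\<Prod>k\<in>{..<length xs}. if e k then xs ! k else inverse (xs ! k))) < 1"
    using assms unfolding conv_domain_def by blast
  also have "norm (p * (\<Prod>k\<in>{..<length xs}. if e k then xs ! k else inverse (xs ! k)))
      = norm p * (\<Prod>k\<in>{..<length xs}. Rn (xs ! k))"
    by (simp add: norm_mult prod_norm[symmetric] e_def norm_choice_Rn)
  also have "(\<Prod>k\<in>{..<length xs}. Rn (xs ! k)) = prod_list (map Rn xs)"
    by (simp add: prod.list_conv_set_nth atLeast0LessThan)
  finally show ?thesis .
qed

lemma CD_single: assumes "conv_domain p xs" "k < length xs" shows "norm (p * xs ! k) < 1"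
proof -
  have H: "\<forall>K \<subseteq> {..<length xs}. \<forall>e::nat\<Rightarrow>bool. norm (p * (\<Prod>k\<in>K. if e k then xs!k else inverse (xs!k))) < 1"
    using assms(1) unfolding conv_domain_def by blast
  have sub: "{k} \<subseteq> {..<length xs}" using assms(2) by simp
  have "norm (p * (\<Prod>j\<in>{k}. if (\<lambda>_. True) j then xs ! j else inverse (xs ! j))) < 1"
    using H[rule_format, OF sub, of "\<lambda>_. True"] by simp
  thus ?thesis by simp
qed

lemma prod_neg: "finite I \<Longrightarrow> (\<Prod>i\<in>I. - f i) = (-1::complex) ^ card I * (\<Prod>i\<in>I. f i)"
proof -
  have "(\<Prod>i\<in>I. - f i) = (\<Prod>i\<in>I. (-1) * f i)" by simp
  also have "\<dots> = (-1) ^ card I * (\<Prod>i\<in>I. f i)" by (simp only: prod.distrib prod_constant)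
  finally show "(\<Prod>i\<in>I. - f i) = (-1::complex) ^ card I * (\<Prod>i\<in>I. f i)" .
qed

lemma inner_sum:
  fixes v :: "nat \<Rightarrow> bool \<Rightarrow> complex" and c :: complex
  assumes "finite I"
  shows "(\<Sum>e\<in>I \<rightarrow>\<^sub>E (UNIV::bool set). (-1)^(card I + card {i\<in>I. \<not> e i}) * (c * (\<Prod>i\<in>I. v i (e i))))
       = c * (\<Prod>i\<in>I. v i False - v i True)"
proof -
  have "(\<Sum>e\<in>I \<rightarrow>\<^sub>E (UNIV::bool set). (-1)^(card I + card {i\<in>I. \<not> e i}) * (c * (\<Prod>i\<in>I. v i (e i))))
      = (-1)^card I * c * (\<Sum>e\<in>I \<rightarrow>\<^sub>E (UNIV::bool set). (-1)^card {i\<in>I. \<not> e i} * (\<Prod>i\<in>I. v i (e i)))"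
  proof -
    have "(-1)^(card I + card {i\<in>I. \<not> e i}) * (c * (\<Prod>i\<in>I. v i (e i)))
        = ((-1)^card I * c) * ((-1)^card {i\<in>I. \<not> e i} * (\<Prod>i\<in>I. v i (e i)))" for e :: "nat \<Rightarrow> bool"
      by (simp add: power_add mult_ac)
    hence "(\<Sum>e\<in>I \<rightarrow>\<^sub>E (UNIV::bool set). (-1)^(card I + card {i\<in>I. \<not> e i}) * (c * (\<Prod>i\<in>I. v i (e i))))
        = (\<Sum>e\<in>I \<rightarrow>\<^sub>E (UNIV::bool set). ((-1)^card I * c) * ((-1)^card {i\<in>I. \<not> e i} * (\<Prod>i\<in>I. v i (e i))))"
      by (intro sum.cong) auto
    thus ?thesis by (simp only: sum_distrib_left[symmetric])
  qed
  also have "\<dots> = (-1)^card I * c * (\<Prod>i\<in>I. v i True - v i False)"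
    using assms by (simp add: sign_expand)
  also have "\<dots> = c * ((-1)^card I * (\<Prod>i\<in>I. v i True - v i False))" by simp
  also have "\<dots> = c * (\<Prod>i\<in>I. - (v i True - v i False))" by (simp only: prod_neg[OF assms])
  finally show ?thesis by simp
qed

lemma outer_sum:
  fixes a C :: "nat \<Rightarrow> complex" and c :: complex
  assumes "finite A"
  shows "(\<Sum>I\<in>Pow A. c * (\<Prod>i\<in>I. a i) * (\<Prod>j\<in>A - I. C j)) = c * (\<Prod>j\<in>A. a j + C j)"
  using prod_add[OF assms, of a C] by (simp add: sum_distrib_left ac_simps)

lemma X1_lemma:
  fixes ss :: "complex list" and s :: complex and P :: "nat set \<Rightarrow> complex" and A :: "nat set"
  assumes finA: "finite A" and mk: "m = 2*k-1"
  shows "(\<Sum>I\<in>Pow A. \<Sum>e\<in>I \<rightarrow>\<^sub>E (UNIV::bool set).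
            (-1)^(card I + card {i\<in>I. \<not> e i}) *
            ((s * (\<Prod>i\<in>I. if e i then ss!i else inverse (ss!i)))^m * (\<Prod>j\<in>A - I. CEm (ss!j) N + gg (ss!j) k)))
       = s^m * (\<Prod>j\<in>A. CEm (ss!j) N)"
proof -
  have inner: "(\<Sum>e\<in>I \<rightarrow>\<^sub>E (UNIV::bool set).
            (-1)^(card I + card {i\<in>I. \<not> e i}) *
            ((s * (\<Prod>i\<in>I. if e i then ss!i else inverse (ss!i)))^m * (\<Prod>j\<in>A - I. CEm (ss!j) N + gg (ss!j) k)))
        = s^m * (\<Prod>i\<in>I. - gg (ss!i) k) * (\<Prod>j\<in>A - I. CEm (ss!j) N + gg (ss!j) k)" if IA: "I \<in> Pow A" for I
  proof -
    have fI: "finite I" using IA finA by (auto intro: finite_subset)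
    let ?P = "\<Prod>j\<in>A - I. CEm (ss!j) N + gg (ss!j) k"
    have "(\<Sum>e\<in>I \<rightarrow>\<^sub>E (UNIV::bool set).
            (-1)^(card I + card {i\<in>I. \<not> e i}) *
            ((s * (\<Prod>i\<in>I. if e i then ss!i else inverse (ss!i)))^m * ?P))
        = (\<Sum>e\<in>I \<rightarrow>\<^sub>E (UNIV::bool set).
            (-1)^(card I + card {i\<in>I. \<not> e i}) * (s^m * (\<Prod>i\<in>I. (\<lambda>i b. (if b then ss!i else inverse (ss!i))^m) i (e i)))) * ?P"
      unfolding sum_distrib_right by (rule sum.cong[OF refl]) (simp add: power_mult_distrib prod_power_distrib mult_ac)
    also have "\<dots> = s^m * (\<Prod>i\<in>I. inverse (ss!i)^m - (ss!i)^m) * ?P"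
      by (subst inner_sum[OF fI]) simp
    also have "(\<Prod>i\<in>I. inverse (ss!i)^m - (ss!i)^m) = (\<Prod>i\<in>I. - gg (ss!i) k)"
      using mk by (simp add: gg_def)
    finally show ?thesis .
  qed
  have "(\<Sum>I\<in>Pow A. \<Sum>e\<in>I \<rightarrow>\<^sub>E (UNIV::bool set).
            (-1)^(card I + card {i\<in>I. \<not> e i}) *
            ((s * (\<Prod>i\<in>I. if e i then ss!i else inverse (ss!i)))^m * (\<Prod>j\<in>A - I. CEm (ss!j) N + gg (ss!j) k)))
      = (\<Sum>I\<in>Pow A. s^m * (\<Prod>i\<in>I. - gg (ss!i) k) * (\<Prod>j\<in>A - I. CEm (ss!j) N + gg (ss!j) k))"
    by (rule sum.cong[OF refl]) (rule inner)
  also have "\<dots> = s^m * (\<Prod>j\<in>A. - gg (ss!j) k + (CEm (ss!j) N + gg (ss!j) k))"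
    by (rule outer_sum[OF finA])
  finally show ?thesis by simp
qed

lemma X2_lemma:
  fixes ss :: "complex list" and s :: complex and A :: "nat set"
  assumes finA: "finite A" and mk: "m = 2*k-1"
  shows "(\<Sum>I\<in>Pow A. \<Sum>e\<in>I \<rightarrow>\<^sub>E (UNIV::bool set).
            (-1)^(card I + card {i\<in>I. \<not> e i}) *
            (inverse (s * (\<Prod>i\<in>I. if e i then ss!i else inverse (ss!i)))^m * (\<Prod>j\<in>A - I. CEm (ss!j) N)))
       = inverse s^m * (\<Prod>j\<in>A. CEm (ss!j) N + gg (ss!j) k)"
proof -
  have inner: "(\<Sum>e\<in>I \<rightarrow>\<^sub>E (UNIV::bool set).
            (-1)^(card I + card {i\<in>I. \<not> e i}) *
            (inverse (s * (\<Prod>i\<in>I. if e i then ss!i else inverse (ss!i)))^m * (\<Prod>j\<in>A - I. CEm (ss!j) N)))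
        = inverse s^m * (\<Prod>i\<in>I. gg (ss!i) k) * (\<Prod>j\<in>A - I. CEm (ss!j) N)" if IA: "I \<in> Pow A" for I
  proof -
    have fI: "finite I" using IA finA by (auto intro: finite_subset)
    let ?P = "\<Prod>j\<in>A - I. CEm (ss!j) N"
    have invp: "inverse (s * (\<Prod>i\<in>I. if e i then ss!i else inverse (ss!i)))
        = inverse s * (\<Prod>i\<in>I. inverse (if e i then ss!i else inverse (ss!i)))" for e :: "nat \<Rightarrow> bool"
      by (simp add: prod_inversef[symmetric] comp_def inverse_mult_distrib)
    have "(\<Sum>e\<in>I \<rightarrow>\<^sub>E (UNIV::bool set).
            (-1)^(card I + card {i\<in>I. \<not> e i}) *
            (inverse (s * (\<Prod>i\<in>I. if e i then ss!i else inverse (ss!i)))^m * ?P))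
        = (\<Sum>e\<in>I \<rightarrow>\<^sub>E (UNIV::bool set).
            (-1)^(card I + card {i\<in>I. \<not> e i}) * (inverse s^m * (\<Prod>i\<in>I. (\<lambda>i b. inverse (if b then ss!i else inverse (ss!i))^m) i (e i)))) * ?P"
      unfolding invp sum_distrib_right by (rule sum.cong[OF refl]) (simp add: power_mult_distrib prod_power_distrib mult_ac)
    also have "\<dots> = inverse s^m * (\<Prod>i\<in>I. (ss!i)^m - inverse (ss!i)^m) * ?P"
      by (subst inner_sum[OF fI]) simp
    also have "(\<Prod>i\<in>I. (ss!i)^m - inverse (ss!i)^m) = (\<Prod>i\<in>I. gg (ss!i) k)"
      using mk by (simp add: gg_def)
    finally show ?thesis .
  qed
  have "(\<Sum>I\<in>Pow A. \<Sum>e\<in>I \<rightarrow>\<^sub>E (UNIV::bool set).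
            (-1)^(card I + card {i\<in>I. \<not> e i}) *
            (inverse (s * (\<Prod>i\<in>I. if e i then ss!i else inverse (ss!i)))^m * (\<Prod>j\<in>A - I. CEm (ss!j) N)))
      = (\<Sum>I\<in>Pow A. inverse s^m * (\<Prod>i\<in>I. gg (ss!i) k) * (\<Prod>j\<in>A - I. CEm (ss!j) N))"
    by (rule sum.cong[OF refl]) (rule inner)
  also have "\<dots> = inverse s^m * (\<Prod>j\<in>A. gg (ss!j) k + CEm (ss!j) N)"
    by (rule outer_sum[OF finA])
  finally show ?thesis by (simp add: add.commute)
qed

lemma pointwise:
  fixes p :: complex and ss :: "complex list"
  assumes ne: "ss \<noteq> []" and p0: "p \<noteq> 0"
  shows "(\<Sum>I\<in>Pow {1..<length ss}. \<Sum>e\<in>I \<rightarrow>\<^sub>E (UNIV::bool set).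
      - ((-1)^(card I + card {i\<in>I. \<not> e i})) *
      EP p (inverse (hd ss * (\<Prod>i\<in>I. if e i then ss!i else inverse (ss!i))))
           (map (nth ss) (filter (\<lambda>j. j \<notin> I) [1..<length ss])) N k)
    = EP p (p * hd ss) (tl ss) N k"
proof -
  define s where "s = hd ss"
  define A where "A = {1..<length ss}"
  define m where "m = 2*k-1"
  define Wc where "Wc = Wm p N * of_nat (count N k + 1)"
  define u where "u I e = s * (\<Prod>i\<in>I. if e i then ss!i else inverse (ss!i))" for I and e :: "nat \<Rightarrow> bool"
  define sg where "sg I e = ((-1::complex)^(card I + card {i\<in>I. \<not> e i}))" for I and e :: "nat \<Rightarrow> bool"
  have finA: "finite A" by (simp add: A_def)
  have EPI: "- sg I e * EP p (inverse (u I e)) (map (nth ss) (filter (\<lambda>j. j \<notin> I) [1..<length ss])) N k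
      = Wc * p^m * (sg I e * ((u I e)^m * (\<Prod>j\<in>A - I. CEm (ss!j) N + gg (ss!j) k)))
        - Wc * (sg I e * (inverse (u I e)^m * (\<Prod>j\<in>A - I. CEm (ss!j) N)))" for I e
    unfolding EP_def Fm_filter CEm_add Wc_def m_def A_def by (simp add: algebra_simps)
  have "(\<Sum>I\<in>Pow A. \<Sum>e\<in>I \<rightarrow>\<^sub>E (UNIV::bool set).
      - sg I e * EP p (inverse (u I e)) (map (nth ss) (filter (\<lambda>j. j \<notin> I) [1..<length ss])) N k)
      = (\<Sum>I\<in>Pow A. \<Sum>e\<in>I \<rightarrow>\<^sub>E (UNIV::bool set).
          Wc * p^m * (sg I e * ((u I e)^m * (\<Prod>j\<in>A - I. CEm (ss!j) N + gg (ss!j) k)))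
        - Wc * (sg I e * (inverse (u I e)^m * (\<Prod>j\<in>A - I. CEm (ss!j) N))))"
    by (simp only: EPI)
  also have "\<dots> = Wc * p^m * (\<Sum>I\<in>Pow A. \<Sum>e\<in>I \<rightarrow>\<^sub>E (UNIV::bool set). sg I e * ((u I e)^m * (\<Prod>j\<in>A - I. CEm (ss!j) N + gg (ss!j) k)))
        - Wc * (\<Sum>I\<in>Pow A. \<Sum>e\<in>I \<rightarrow>\<^sub>E (UNIV::bool set). sg I e * (inverse (u I e)^m * (\<Prod>j\<in>A - I. CEm (ss!j) N)))"
    by (simp only: sum_subtractf sum_distrib_left)
  also have "(\<Sum>I\<in>Pow A. \<Sum>e\<in>I \<rightarrow>\<^sub>E (UNIV::bool set). sg I e * ((u I e)^m * (\<Prod>j\<in>A - I. CEm (ss!j) N + gg (ss!j) k)))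
      = s^m * (\<Prod>j\<in>A. CEm (ss!j) N)"
    unfolding sg_def u_def by (rule X1_lemma[OF finA m_def])
  also have "(\<Sum>I\<in>Pow A. \<Sum>e\<in>I \<rightarrow>\<^sub>E (UNIV::bool set). sg I e * (inverse (u I e)^m * (\<Prod>j\<in>A - I. CEm (ss!j) N)))
      = inverse s^m * (\<Prod>j\<in>A. CEm (ss!j) N + gg (ss!j) k)"
    unfolding sg_def u_def by (rule X2_lemma[OF finA m_def])
  also have "Wc * p^m * (s^m * (\<Prod>j\<in>A. CEm (ss!j) N)) - Wc * (inverse s^m * (\<Prod>j\<in>A. CEm (ss!j) N + gg (ss!j) k))
      = EP p (p * s) (tl ss) N k"
  proof -
    have tl: "tl ss = map (nth ss) (filter (\<lambda>j. j \<notin> {}) [1..<length ss])"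
      using ne by (simp add: tl_as_map)
    have F: "Fm (tl ss) M = (\<Prod>j\<in>A. CEm (ss!j) M)" for M
      unfolding tl Fm_filter A_def by simp
    have pp: "p^m * inverse p^m = 1" using p0 by (simp add: power_mult_distrib[symmetric])
    have "p^m * inverse (p * s)^m = (p^m * inverse p^m) * inverse s^m"
      by (simp add: inverse_mult_distrib power_mult_distrib mult_ac)
    hence pm: "p^m * inverse (p * s)^m = inverse s^m" using pp by simp
    show ?thesis
      unfolding EP_def F Wc_def[symmetric] m_def[symmetric] CEm_add pm power_mult_distrib
      by (simp add: algebra_simps)
  qed
  finally show ?thesis unfolding s_def sg_def u_def A_def .
qed

lemma norm_inv_u:
  fixes p :: complex and ss :: "complex list"
  assumes ne: "ss \<noteq> []" and cdL: "conv_domain p ((p * hd ss) # tl ss)" and IA: "I \<subseteq> {1..<length ss}"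
  shows "norm (inverse (hd ss * (\<Prod>i\<in>I. if e i then ss!i else inverse (ss!i)))) < 1"
proof -
  define L where "L = (p * hd ss) # tl ss"
  have p0: "p \<noteq> 0" using cdL by (rule CD_p)
  have lenL: "length L = length ss" using ne by (simp add: L_def)
  have H: "\<forall>K \<subseteq> {..<length L}. \<forall>e::nat\<Rightarrow>bool. norm (p * (\<Prod>k\<in>K. if e k then L!k else inverse (L!k))) < 1"
    using cdL unfolding conv_domain_def L_def by blast
  have sub: "insert 0 I \<subseteq> {..<length L}" using IA lenL ne by auto
  define e' where "e' = (\<lambda>k::nat. k \<noteq> 0 \<and> \<not> e k)"
  have "norm (p * (\<Prod>k\<in>insert 0 I. if e' k then L!k else inverse (L!k))) < 1"
    using H[rule_format, OF sub, of e'] .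
  moreover have "p * (\<Prod>k\<in>insert 0 I. if e' k then L!k else inverse (L!k))
      = inverse (hd ss * (\<Prod>i\<in>I. if e i then ss!i else inverse (ss!i)))"
  proof -
    have fI: "finite I" using IA by (rule finite_subset) simp
    have I0: "0 \<notin> I" using IA by auto
    have Li: "L ! i = ss ! i" if iI: "i \<in> I" for i
    proof -
      obtain j where "i = Suc j" using iI I0 by (cases i) auto
      thus ?thesis using ne by (cases ss) (auto simp: L_def)
    qed
    have "(\<Prod>k\<in>insert 0 I. if e' k then L!k else inverse (L!k))
        = inverse (p * hd ss) * (\<Prod>i\<in>I. inverse (if e i then ss!i else inverse (ss!i)))"
    proof -
      have "(\<Prod>k\<in>I. if e' k then L!k else inverse (L!k)) = (\<Prod>i\<in>I. inverse (if e i then ss!i else inverse (ss!i)))"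
      proof (rule prod.cong[OF refl])
        fix i assume iI: "i \<in> I"
        hence "i \<noteq> 0" using I0 by (metis)
        thus "(if e' i then L!i else inverse (L!i)) = inverse (if e i then ss!i else inverse (ss!i))"
          using Li[OF iI] by (simp add: e'_def)
      qed
      moreover have "(if e' 0 then L!0 else inverse (L!0)) = inverse (p * hd ss)" by (simp add: e'_def L_def)
      ultimately show ?thesis using fI I0 by simp
    qed
    also have "(\<Prod>i\<in>I. inverse (if e i then ss!i else inverse (ss!i))) = inverse (\<Prod>i\<in>I. if e i then ss!i else inverse (ss!i))"
      by (simp add: prod_inversef[symmetric] comp_def)
    finally show ?thesis using p0 by (simp add: inverse_mult_distrib)
  qed
  ultimately show ?thesis by simp
qed


theorem theorem3p3:
  fixes p :: complex and ss :: "complex list"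
  assumes "ss \<noteq> []"
    and "conv_domain p ((p * hd ss) # tl ss)"
    and "\<forall>I \<subseteq> {1..<length ss}. \<forall>e. conv_domain p (rhs_args ss I e)"
  shows "trace_C p ((p * hd ss) # tl ss) =
    (\<Sum>I\<in>Pow {1..<length ss}. \<Sum>e\<in>I \<rightarrow>\<^sub>E (UNIV :: bool set).
       (-1) ^ (card I + card {i\<in>I. \<not> e i}) * trace_C p (rhs_args ss I e))"
proof -
  note ne = assms(1) and cdL = assms(2) and cdR = assms(3)
  define s where "s = hd ss"
  define ys where "ys = tl ss"
  define A where "A = {1..<length ss}"
  define Q where "Q = PM \<times> {1::nat..}"
  define u where "u I e = s * (\<Prod>i\<in>I. if e i then ss!i else inverse (ss!i))" for I and e :: "nat \<Rightarrow> bool"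
  define rest where "rest I = map (nth ss) (filter (\<lambda>j. j \<notin> I) [1..<length ss])" for I :: "nat set"
  define sg where "sg I e = ((-1::complex)^(card I + card {i\<in>I. \<not> e i}))" for I and e :: "nat \<Rightarrow> bool"
  have ssc: "ss = s # ys" using ne by (simp add: s_def ys_def)
  have rhs: "rhs_args ss I e = u I e # rest I" for I e
    by (simp add: rhs_args_def u_def rest_def s_def)
  have p0: "p \<noteq> 0" using cdL by (rule CD_p)
  have rest0: "rest {} = ys" unfolding rest_def ys_def using ne by (simp add: tl_as_map)
  have cdss: "conv_domain p ss"
  proof -
    have "conv_domain p (rhs_args ss {} (\<lambda>_. True))" using cdR by blast
    thus ?thesis unfolding rhs by (simp add: u_def rest0 ssc)
  qed
  have x1: "norm (p * s) < 1" using CD_single[OF cdss, of 0] ne by (simp add: s_def hd_conv_nth)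
  have ys0: "\<forall>y\<in>set ys. y \<noteq> 0" using CD_nz[OF cdL] by (simp add: ys_def)
  have ps0: "p * s \<noteq> 0" using CD_nz[OF cdL, of "p * hd ss"] by (simp add: s_def)
  have rhoL: "norm p * (Rn (p * s) * prod_list (map Rn ys)) < 1" using CD_rho[OF cdL] by (simp add: s_def ys_def)
  have LHS: "((\<lambda>(N,k). EP p (p * s) ys N k) has_sum trace_C p ((p * hd ss) # tl ss)) Q"
    using Eplus[OF p0 ps0 x1 ys0 rhoL] by (simp add: trace_C_Tm s_def ys_def Q_def)
  have trm: "((\<lambda>z. - sg I e * (\<lambda>(N,k). EP p (inverse (u I e)) (rest I) N k) z) has_sum
                (sg I e * trace_C p (rhs_args ss I e))) Q" if IA: "I \<in> Pow A" for I e
  proof -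
    have cdI: "conv_domain p (u I e # rest I)" using cdR IA unfolding rhs A_def by auto
    have u0: "u I e \<noteq> 0" using CD_nz[OF cdI] by simp
    have r0: "\<forall>y\<in>set (rest I). y \<noteq> 0" using CD_nz[OF cdI] by simp
    have rhoI: "norm p * (Rn (inverse (u I e)) * prod_list (map Rn (rest I))) < 1"
      using CD_rho[OF cdI] by (simp add: Rn_inverse)
    have ui1: "norm (inverse (u I e)) < 1"
      unfolding u_def s_def using norm_inv_u[OF ne cdL, of I e] IA by (simp add: A_def)
    have iu0: "inverse (u I e) \<noteq> 0" using u0 by simp
    have E: "((\<lambda>(N,k). EP p (inverse (u I e)) (rest I) N k) has_sum Tm p (inverse (u I e) # rest I)) Q"
      unfolding Q_def by (rule Eplus[OF p0 iu0 ui1 r0 rhoI])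
    have "Tm p (inverse (u I e) # rest I) = - Tm p (u I e # rest I)"
      unfolding Tm_def Fm_neg by (simp add: infsum_uminus)
    hence "trace_C p (rhs_args ss I e) = - Tm p (inverse (u I e) # rest I)"
      by (simp add: rhs trace_C_Tm)
    thus ?thesis using has_sum_cmult_right[OF E, of "- sg I e"] by simp
  qed
  have RHS: "((\<lambda>z. \<Sum>I\<in>Pow A. \<Sum>e\<in>I \<rightarrow>\<^sub>E (UNIV :: bool set). - sg I e * (\<lambda>(N,k). EP p (inverse (u I e)) (rest I) N k) z) has_sum
       (\<Sum>I\<in>Pow A. \<Sum>e\<in>I \<rightarrow>\<^sub>E (UNIV :: bool set). sg I e * trace_C p (rhs_args ss I e))) Q"
  proof (rule has_sum_finite_sum)
    show "finite (Pow A)" by (simp add: A_def)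
    fix I assume IA: "I \<in> Pow A"
    have fI: "finite I" using IA by (auto simp: A_def intro: finite_subset)
    show "((\<lambda>z. \<Sum>e\<in>I \<rightarrow>\<^sub>E (UNIV :: bool set). - sg I e * (\<lambda>(N,k). EP p (inverse (u I e)) (rest I) N k) z) has_sum
       (\<Sum>e\<in>I \<rightarrow>\<^sub>E (UNIV :: bool set). sg I e * trace_C p (rhs_args ss I e))) Q"
      by (rule has_sum_finite_sum) (use fI IA trm in \<open>auto intro: finite_PiE\<close>)
  qed
  have eq: "(\<Sum>I\<in>Pow A. \<Sum>e\<in>I \<rightarrow>\<^sub>E (UNIV :: bool set). - sg I e * (\<lambda>(N,k). EP p (inverse (u I e)) (rest I) N k) z)
       = (\<lambda>(N,k). EP p (p * s) ys N k) z" for z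
  proof -
    obtain N k where z: "z = (N,k)" by (cases z)
    show ?thesis unfolding z using pointwise[OF ne p0, of N k]
      by (simp add: A_def sg_def u_def rest_def s_def ys_def)
  qed
  have "((\<lambda>(N,k). EP p (p * s) ys N k) has_sum
       (\<Sum>I\<in>Pow A. \<Sum>e\<in>I \<rightarrow>\<^sub>E (UNIV :: bool set). sg I e * trace_C p (rhs_args ss I e))) Q"
    using RHS unfolding eq .
  from has_sum_unique[OF LHS this] show ?thesis by (simp add: A_def sg_def)
qed

end
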